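(* Let $\gamma$ be a gauge on $\mathbb{R}^d$ with skewness $\sigma$. The Fermat–Weber estimator with respect to $\gamma$ has breakdown point exactly $\frac{1}{1+\sigma}$.
   Context: A gauge $\gamma$ on $\mathbb{R}^d$ is the Minkowski functional of a convex compact set $B_\gamma$ with the origin in its interior (not necessarily symmetric); its skewness is $\sigma=\sup_{x\neq0}\gamma(x)/\gamma(-x)$. For a finite set $A$ with positive weights summing to $1$, the Fermat–Weber set $\mathrm{FW}_\gamma(A,w)$ is the set of minimizers of $\sum_{a\in A}w_a\gamma(x-a)$. For $\tau<1$, a $\tau$-corruption of $(A,w)$ is obtained by replacing a subsample $C\subseteq A$ of total weight $w_C\le\tau$ by another finite weighted sample $C'$ of the same total weight. The estimator is $\tau$-robust if for every such $(A,w)$ there is a bounded set $K_\tau$ containing $\mathrm{FW}_\gamma(A')$ for all $\tau$-corruptions $A'$ of $A$. The breakdown point is the supremum of all $\tau$ for which the estimator is $\tau$-robust. *)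

theory Defs
  imports "HOL-Analysis.Analysis"
begin

definition minkowski_functional :: "'a::euclidean_space set \<Rightarrow> 'a \<Rightarrow> real" where
  "minkowski_functional B x = Inf {t. 0 < t \<and> x \<in> (\<lambda>b. t *\<^sub>R b) ` B}"

definition is_gauge :: "('a::euclidean_space \<Rightarrow> real) \<Rightarrow> bool" where
  "is_gauge g \<longleftrightarrow> (\<exists>B. convex B \<and> compact B \<and> 0 \<in> interior B \<and> g = minkowski_functional B)"

definition skewness :: "('a::euclidean_space \<Rightarrow> real) \<Rightarrow> real" where
  "skewness g = (SUP x\<in>UNIV - {0}. g x / g (- x))"

text \<open>A finite weighted sample is represented by its weight function: finite support,
  nonnegative weights (the support is the sample A, weights there are positive).\<close>
definition fin_weights :: "('a \<Rightarrow> real) \<Rightarrow> bool" where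
  "fin_weights w \<longleftrightarrow> finite {a. w a \<noteq> 0} \<and> (\<forall>a. 0 \<le> w a)"

definition sample :: "('a \<Rightarrow> real) \<Rightarrow> bool" where
  "sample w \<longleftrightarrow> fin_weights w \<and> sum w {a. w a \<noteq> 0} = 1"

definition fw_objective :: "('a::euclidean_space \<Rightarrow> real) \<Rightarrow> ('a \<Rightarrow> real) \<Rightarrow> 'a \<Rightarrow> real" where
  "fw_objective g w x = (\<Sum>a\<in>{a. w a \<noteq> 0}. w a * g (x - a))"

definition FW_set :: "('a::euclidean_space \<Rightarrow> real) \<Rightarrow> ('a \<Rightarrow> real) \<Rightarrow> 'a set" where
  "FW_set g w = {x. \<forall>y. fw_objective g w x \<le> fw_objective g w y}"

definition corruption :: "real \<Rightarrow> ('a \<Rightarrow> real) \<Rightarrow> ('a \<Rightarrow> real) \<Rightarrow> bool" where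
  "corruption \<tau> w w' \<longleftrightarrow>
     (\<exists>C v. C \<subseteq> {a. w a \<noteq> 0} \<and> sum w C \<le> \<tau> \<and> fin_weights v \<and>
            sum v {a. v a \<noteq> 0} = sum w C \<and>
            w' = (\<lambda>a. (if a \<in> C then 0 else w a) + v a))"

definition robust :: "('a::euclidean_space \<Rightarrow> real) \<Rightarrow> real \<Rightarrow> bool" where
  "robust g \<tau> \<longleftrightarrow> (\<forall>w. sample w \<longrightarrow>
      (\<exists>K. bounded K \<and> (\<forall>w'. corruption \<tau> w w' \<longrightarrow> FW_set g w' \<subseteq> K)))"

definition breakdown_point :: "('a::euclidean_space \<Rightarrow> real) \<Rightarrow> real" where
  "breakdown_point g = Sup {\<tau>. 0 \<le> \<tau> \<and> \<tau> < 1 \<and> robust g \<tau>}"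

end

theory Submission
  imports Defs
begin



lemma mem_scaleR_image:
  fixes B :: "'a::euclidean_space set"
  assumes "t > 0"
  shows "x \<in> (\<lambda>b. t *\<^sub>R b) ` B \<longleftrightarrow> inverse t *\<^sub>R x \<in> B"
proof
  assume "x \<in> (\<lambda>b. t *\<^sub>R b) ` B"
  then obtain b where "b \<in> B" "x = t *\<^sub>R b" by auto
  then show "inverse t *\<^sub>R x \<in> B" using assms by simp
next
  assume "inverse t *\<^sub>R x \<in> B"
  moreover have "x = t *\<^sub>R (inverse t *\<^sub>R x)" using assms by simp
  ultimately show "x \<in> (\<lambda>b. t *\<^sub>R b) ` B" by blast
qed

lemma gauge_props:
  fixes g :: "'a::euclidean_space \<Rightarrow> real"
  assumes "is_gauge g"
  shows "\<exists>m M. 0 < m \<and> 0 < M \<and> (\<forall>x. m * norm x \<le> g x \<and> g x \<le> M * norm x)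
     \<and> (\<forall>x y. g (x + y) \<le> g x + g y) \<and> (\<forall>c x. 0 < c \<longrightarrow> g (c *\<^sub>R x) = c * g x)"
proof -
  obtain B where cB: "convex B" and kB: "compact B" and iB: "0 \<in> interior B"
    and gdef: "g = minkowski_functional B" using assms unfolding is_gauge_def by blast
  obtain r where r: "r > 0" "cball 0 r \<subseteq> B" using iB mem_interior_cball by blast
  obtain M0 where M0: "M0 > 0" "\<forall>b\<in>B. norm b \<le> M0"
    using kB compact_imp_bounded bounded_pos by blast
  have B0: "0 \<in> B" using r by auto
  define T where "T x = {t. 0 < t \<and> x \<in> (\<lambda>b. t *\<^sub>R b) ` B}" for x
  have gT: "g x = Inf (T x)" for x unfolding gdef minkowski_functional_def T_def by simp
  have Tmem: "t \<in> T x \<longleftrightarrow> 0 < t \<and> inverse t *\<^sub>R x \<in> B" for t x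
    unfolding T_def using mem_scaleR_image by auto
  have K1: "t \<in> T x" if "t > 0" "norm x \<le> r * t" for t x
  proof -
    have "norm (inverse t *\<^sub>R x) \<le> r" using that
      by (simp add: divide_simps mult.commute)
    then show ?thesis using Tmem that r by auto
  qed
  have K2: "norm x \<le> M0 * t" if "t \<in> T x" for t x
  proof -
    have "t > 0" "norm (inverse t *\<^sub>R x) \<le> M0" using that Tmem M0 by auto
    then show ?thesis by (simp add: divide_simps mult.commute)
  qed
  have K3: "s \<in> T x" if "t \<in> T x" "t \<le> s" for s t x
  proof -
    have t: "t > 0" "inverse t *\<^sub>R x \<in> B" using that Tmem by auto
    have s: "s > 0" using t that by auto
    have "(t / s) *\<^sub>R (inverse t *\<^sub>R x) + (1 - t / s) *\<^sub>R 0 \<in> B"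
      using convexD[OF cB t(2) B0, of "t/s" "1 - t/s"] t s that by (simp add: divide_simps)
    moreover have "(t / s) *\<^sub>R (inverse t *\<^sub>R x) + (1 - t / s) *\<^sub>R 0 = inverse s *\<^sub>R x"
      using t s by (simp add: divide_simps)
    ultimately show ?thesis using Tmem s by auto
  qed
  have Tne: "T x \<noteq> {}" for x
  proof -
    have "norm x \<le> r * (norm x / r + 1)" using r by (simp add: field_simps)
    then have "norm x / r + 1 \<in> T x" using r by (intro K1) (auto intro: add_nonneg_pos)
    then show ?thesis by blast
  qed
  have Tbdd: "bdd_below (T x)" for x unfolding bdd_below_def using Tmem by (meson less_le)
  have G1: "g x \<le> t" if "t \<in> T x" for t x using gT cInf_lower[OF that Tbdd] by simp
  have G2: "t \<in> T x" if lt: "g x < t" for t x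
  proof -
    have "Inf (T x) < t" using lt gT by simp
    then obtain s where "s \<in> T x" "s < t" using cInf_lessD[OF Tne] by metis
    then show ?thesis using K3 by auto
  qed
  have G3: "norm x / M0 \<le> g x" for x
    unfolding gT using M0 K2 by (intro cInf_greatest[OF Tne]) (simp add: divide_simps mult.commute)
  have G4: "g x \<le> norm x / r" for x
  proof (rule field_le_epsilon)
    fix e :: real assume e: "e > 0"
    have "norm x \<le> r * (norm x / r + e)" using r e by (simp add: field_simps)
    then have "norm x / r + e \<in> T x" using r e by (intro K1) (auto intro: add_nonneg_pos)
    then show "g x \<le> norm x / r + e" using G1 by blast
  qed
  have G5: "g (x + y) \<le> g x + g y" for x y
  proof (rule field_le_epsilon)
    fix e :: real assume e: "e > 0"
    define s where "s = g x + e/2"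
    define t where "t = g y + e/2"
    have gx0: "g x \<ge> 0" "g y \<ge> 0" using G3[of x] G3[of y] M0 by (auto intro: order_trans[rotated])
    have sT: "s \<in> T x" "t \<in> T y" using G2 e unfolding s_def t_def by auto
    then have s: "s > 0" "inverse s *\<^sub>R x \<in> B" and t: "t > 0" "inverse t *\<^sub>R y \<in> B"
      using Tmem by auto
    have "(s/(s+t)) *\<^sub>R (inverse s *\<^sub>R x) + (t/(s+t)) *\<^sub>R (inverse t *\<^sub>R y) \<in> B"
      using convexD[OF cB s(2) t(2), of "s/(s+t)" "t/(s+t)"] s t by (simp add: add_divide_distrib[symmetric])
    moreover have "(s/(s+t)) *\<^sub>R (inverse s *\<^sub>R x) + (t/(s+t)) *\<^sub>R (inverse t *\<^sub>R y)
        = inverse (s+t) *\<^sub>R (x + y)"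
      using s t by (simp add: divide_simps scaleR_add_right)
    ultimately have "s + t \<in> T (x + y)" using Tmem s t by auto
    then have "g (x+y) \<le> s + t" using G1 by blast
    then show "g (x + y) \<le> g x + g y + e" unfolding s_def t_def by simp
  qed
  have G6: "g (c *\<^sub>R x) \<le> c * g x" if c: "c > 0" for c x
  proof (rule field_le_epsilon)
    fix e :: real assume e: "e > 0"
    have "g x + e / c \<in> T x" using G2 e c by auto
    then have h: "g x + e/c > 0" "inverse (g x + e/c) *\<^sub>R x \<in> B" using Tmem by auto
    have "inverse (c * (g x + e/c)) *\<^sub>R (c *\<^sub>R x) = inverse (g x + e/c) *\<^sub>R x"
      using c by simp
    then have "c * (g x + e/c) \<in> T (c *\<^sub>R x)" unfolding Tmem using h c by (simp only:) simp
    then have "g (c *\<^sub>R x) \<le> c * (g x + e/c)" using G1 by blast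
    then show "g (c *\<^sub>R x) \<le> c * g x + e" using c by (simp add: algebra_simps)
  qed
  have G7: "g (c *\<^sub>R x) = c * g x" if c: "c > 0" for c x
  proof -
    have "g x = g (inverse c *\<^sub>R (c *\<^sub>R x))" using c by simp
    also have "\<dots> \<le> inverse c * g (c *\<^sub>R x)" by (rule G6) (use c in simp)
    finally have "c * g x \<le> g (c *\<^sub>R x)" using c by (simp add: field_simps)
    then show ?thesis using G6[OF c, of x] by linarith
  qed
  show ?thesis
    apply (rule exI[of _ "1/M0"], rule exI[of _ "1/r"])
    using M0 r G3 G4 G5 G7 by auto
qed



definition GP :: "('a::euclidean_space \<Rightarrow> real) \<Rightarrow> real \<Rightarrow> real \<Rightarrow> bool" where
  "GP g m M \<longleftrightarrow> 0 < m \<and> 0 < M \<and> (\<forall>x. m * norm x \<le> g x \<and> g x \<le> M * norm x)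
     \<and> (\<forall>x y. g (x + y) \<le> g x + g y) \<and> (\<forall>c x. 0 < c \<longrightarrow> g (c *\<^sub>R x) = c * g x)"

lemma fw_superset:
  assumes "finite S" "{a. w a \<noteq> 0} \<subseteq> S"
  shows "fw_objective g w x = (\<Sum>a\<in>S. w a * g (x - a))"
  unfolding fw_objective_def using assms by (intro sum.mono_neutral_left) auto

lemma GP_basic:
  assumes "GP g m M"
  shows "g x \<ge> 0" "g 0 = 0" "m * norm x \<le> g x" "g x \<le> M * norm x"
    "g (x + y) \<le> g x + g y" "x \<noteq> 0 \<Longrightarrow> g x > 0" "c > 0 \<Longrightarrow> g (c *\<^sub>R x) = c * g x"
proof -
  have h: "0 < m" "m * norm x \<le> g x" "g x \<le> M * norm x" "m * norm (0::'a) \<le> g 0" "g 0 \<le> M * norm (0::'a)"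
    using assms unfolding GP_def by blast+
  show "g x \<ge> 0" using h(1,2) by (meson mult_nonneg_nonneg norm_ge_zero order_trans less_imp_le)
  show "g 0 = 0" using h(4,5) by simp
  show "m * norm x \<le> g x" "g x \<le> M * norm x" using h by auto
  show "g (x + y) \<le> g x + g y" using assms unfolding GP_def by blast
  show "x \<noteq> 0 \<Longrightarrow> g x > 0" using h(1,2) by (meson mult_pos_pos order_less_le_trans zero_less_norm_iff)
  show "c > 0 \<Longrightarrow> g (c *\<^sub>R x) = c * g x" using assms unfolding GP_def by blast
qed

lemma GP_skew:
  assumes "GP g m M"
  shows "bdd_above ((\<lambda>x. g x / g (- x)) ` (UNIV - {0}))"
    and "g x \<le> skewness g * g (- x)"
    and "skewness g \<ge> 0"
proof -
  have r: "g x / g (- x) \<le> M / m" if "x \<noteq> 0" for x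
  proof -
    have p: "g (-x) > 0" "g x \<ge> 0" using GP_basic[OF assms] that by auto
    have "g x \<le> M * norm x" "m * norm x \<le> g (-x)" using GP_basic(4)[OF assms, of x] GP_basic(3)[OF assms, of "-x"] by auto
    moreover have "m > 0" "M > 0" "norm x > 0" using assms that unfolding GP_def by auto
    ultimately have "g x * m \<le> M * g (-x)"
    proof -
      assume a: "g x \<le> M * norm x" "m * norm x \<le> g (- x)" and b: "m > 0" "M > 0" "norm x > 0"
      have "g x * m \<le> (M * norm x) * m" using a(1) b(1) by (intro mult_right_mono) auto
      also have "\<dots> = M * (m * norm x)" by simp
      also have "\<dots> \<le> M * g (-x)" using a(2) b(2) by (intro mult_left_mono) auto
      finally show ?thesis .
    qed
    then show ?thesis using p \<open>m > 0\<close> by (simp add: divide_simps)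
  qed
  show bdd: "bdd_above ((\<lambda>x. g x / g (- x)) ` (UNIV - {0}))"
    by (rule bdd_aboveI[of _ "M/m"]) (use r in auto)
  have up: "g x / g (- x) \<le> skewness g" if "x \<noteq> 0" for x
    unfolding skewness_def by (rule cSUP_upper[OF _ bdd]) (use that in auto)
  show "g x \<le> skewness g * g (- x)"
  proof (cases "x = 0")
    case True then show ?thesis using GP_basic[OF assms] by simp
  next
    case False
    then have "g (-x) > 0" using GP_basic[OF assms] by simp
    then show ?thesis using up[OF False] by (simp add: divide_simps)
  qed
  obtain b :: 'a where b: "b \<in> Basis" using nonempty_Basis by blast
  then have "b \<noteq> 0" by auto
  moreover have "g b / g (- b) \<ge> 0" using GP_basic[OF assms] by simp
  ultimately show "skewness g \<ge> 0" using up by (meson order_trans)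
qed

lemma GP_cont:
  assumes "GP g m M"
  shows "continuous_on UNIV g"
proof -
  have "dist (g x) (g y) \<le> M * dist x y" for x y
  proof -
    have "g x \<le> g y + g (x - y)" using GP_basic(5)[OF assms, of y "x - y"] by simp
    moreover have "g y \<le> g x + g (y - x)" using GP_basic(5)[OF assms, of x "y - x"] by simp
    moreover have "g (x - y) \<le> M * dist x y" "g (y - x) \<le> M * dist x y"
      using GP_basic(4)[OF assms, of "x-y"] GP_basic(4)[OF assms, of "y-x"]
      by (auto simp: dist_norm norm_minus_commute)
    ultimately show ?thesis by (simp add: dist_real_def abs_le_iff)
  qed
  then have "M-lipschitz_on UNIV g" using assms unfolding GP_def by (intro lipschitz_onI) auto
  then show ?thesis by (rule lipschitz_on_continuous_on)
qed

lemma FW_nonempty: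
  assumes "GP g m M" "fin_weights w" "sum w {a. w a \<noteq> 0} > 0"
  shows "FW_set g w \<noteq> {}"
proof -
  define A where "A = {a. w a \<noteq> 0}"
  define W where "W = sum w A"
  have fA: "finite A" and wnn: "\<And>a. w a \<ge> 0" using assms(2) unfolding fin_weights_def A_def by auto
  have W: "W > 0" using assms(3) unfolding W_def A_def .
  define F where "F x = (\<Sum>a\<in>A. w a * g (x - a))" for x
  have FF: "fw_objective g w x = F x" for x unfolding F_def A_def fw_objective_def by simp
  have cg: "continuous_on UNIV g" using GP_cont[OF assms(1)] .
  have cF: "continuous_on UNIV F" unfolding F_def
    by (intro continuous_on_sum continuous_on_mult continuous_on_const
        continuous_on_compose2[OF cg] continuous_on_diff continuous_on_id) auto
  define C where "C = (\<Sum>a\<in>A. w a * g a)"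
  have m: "m > 0" using assms(1) unfolding GP_def by auto
  have lowF: "F y \<ge> W * m * norm y - C" for y
  proof -
    have "w a * g (y - a) \<ge> w a * (m * norm y) - w a * g a" for a
    proof -
      have "g y \<le> g (y - a) + g a" using GP_basic(5)[OF assms(1), of "y - a" a] by simp
      then have "m * norm y - g a \<le> g (y - a)" using GP_basic(3)[OF assms(1), of y] by linarith
      then have "w a * (m * norm y - g a) \<le> w a * g (y - a)" using mult_left_mono wnn by blast
      then show ?thesis by (simp add: algebra_simps)
    qed
    then have "F y \<ge> (\<Sum>a\<in>A. w a * (m * norm y) - w a * g a)" unfolding F_def by (intro sum_mono) auto
    also have "(\<Sum>a\<in>A. w a * (m * norm y) - w a * g a) = (\<Sum>a\<in>A. w a) * (m * norm y) - C"
      unfolding C_def by (simp only: sum_subtractf sum_distrib_right)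
    also have "\<dots> = W * m * norm y - C" unfolding W_def by simp
    finally show ?thesis .
  qed
  have C0: "C \<ge> 0" unfolding C_def using wnn GP_basic(1)[OF assms(1)] by (intro sum_nonneg) auto
  have F0: "F 0 \<ge> 0" unfolding F_def using wnn GP_basic(1)[OF assms(1)] by (intro sum_nonneg) auto
  define R where "R = (F 0 + C) / (W * m)"
  have R0: "R \<ge> 0" unfolding R_def using C0 F0 W m by auto
  obtain x0 where x0: "x0 \<in> cball 0 R" "\<forall>y\<in>cball 0 R. F x0 \<le> F y"
  proof -
    have "continuous_on (cball 0 R) F" using cF by (rule continuous_on_subset) simp
    moreover have "cball 0 R \<noteq> {}" using R0 by simp
    ultimately obtain z where "z \<in> cball 0 R" "\<forall>y\<in>cball 0 R. F z \<le> F y"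
      using continuous_attains_inf[OF compact_cball] by metis
    then show ?thesis by (rule that)
  qed
  have "F x0 \<le> F y" for y
  proof (cases "y \<in> cball 0 R")
    case True then show ?thesis using x0 by auto
  next
    case False
    then have "norm y > R" by auto
    then have "W * m * norm y > W * m * R" using W m by auto
    also have "W * m * R = F 0 + C" unfolding R_def using W m by simp
    finally have "F y \<ge> F 0" using lowF[of y] by linarith
    moreover have "F x0 \<le> F 0" using x0 R0 by auto
    ultimately show ?thesis by linarith
  qed
  then have "x0 \<in> FW_set g w" unfolding FW_set_def FF by auto
  then show ?thesis by blast
qed




lemma robust_below:
  assumes gp: "GP g m M" and t0: "0 \<le> \<tau>" and tl: "\<tau> * (1 + skewness g) < 1"
  shows "robust g \<tau>"
  unfolding robust_def
proof (intro allI impI)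
  fix w :: "'a \<Rightarrow> real" assume sw: "sample w"
  define \<sigma> where "\<sigma> = skewness g"
  have s0: "\<sigma> \<ge> 0" unfolding \<sigma>_def using GP_skew(3)[OF gp] .
  have skew: "g z \<le> \<sigma> * g (- z)" for z unfolding \<sigma>_def using GP_skew(2)[OF gp] .
  define A where "A = {a. w a \<noteq> 0}"
  have fA: "finite A" and wnn: "\<And>a. w a \<ge> 0" and sA: "sum w A = 1"
    using sw unfolding sample_def fin_weights_def A_def by auto
  define K0 where "K0 = (\<Sum>a\<in>A. w a * (g a + g (- a)))"
  define \<delta> where "\<delta> = 1 - \<tau> * (1 + \<sigma>)"
  have d: "\<delta> > 0" unfolding \<delta>_def \<sigma>_def using tl by simp
  have m: "m > 0" using gp unfolding GP_def by auto
  have gnn: "\<And>z. g z \<ge> 0" using GP_basic(1)[OF gp] .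
  have sub: "\<And>x y. g (x + y) \<le> g x + g y" using GP_basic(5)[OF gp] .
  show "\<exists>K. bounded K \<and> (\<forall>w'. corruption \<tau> w w' \<longrightarrow> FW_set g w' \<subseteq> K)"
  proof (intro exI conjI allI impI)
    show "bounded (cball (0::'a) (K0 / (\<delta> * m)))" by simp
    fix w' assume "corruption \<tau> w w'"
    then obtain C v where C: "C \<subseteq> A" and sC: "sum w C \<le> \<tau>" and fv: "fin_weights v"
      and sv: "sum v {a. v a \<noteq> 0} = sum w C"
      and w': "w' = (\<lambda>a. (if a \<in> C then 0 else w a) + v a)"
      unfolding corruption_def A_def by blast
    define V where "V = {a. v a \<noteq> 0}"
    have fV: "finite V" and vnn: "\<And>a. v a \<ge> 0" using fv unfolding fin_weights_def V_def by auto
    define S where "S = A \<union> V"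
    have fS: "finite S" using fA fV S_def by simp
    define wc where "wc a = (if a \<in> C then 0 else w a)" for a
    have w'2: "w' a = wc a + v a" for a using w' wc_def by simp
    have supp: "{a. w' a \<noteq> 0} \<subseteq> S" unfolding S_def A_def V_def using C w'2 wc_def A_def by auto
    define s where "s = sum w C"
    have fC: "finite C" using C fA finite_subset by blast
    have "sum w S = sum w A" by (rule sum.mono_neutral_right[OF fS]) (auto simp: S_def A_def)
    then have sS: "sum w S = 1" using sA by simp
    have "sum v S = sum v V" by (rule sum.mono_neutral_right[OF fS]) (auto simp: S_def V_def)
    then have vS: "sum v S = s" using sv unfolding s_def V_def by simp
    have CS: "C \<subseteq> S" using C S_def by auto
    have wcS: "sum wc S = 1 - s"
    proof -
      have "sum wc S = sum wc (S - C) + sum wc C" using sum.subset_diff[OF CS fS] by simp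
      also have "sum wc C = 0" unfolding wc_def by simp
      also have "sum wc (S - C) = sum w (S - C)" unfolding wc_def by (intro sum.cong) auto
      also have "\<dots> = sum w S - sum w C" using sum_diff[OF fS CS] .
      finally show ?thesis using sS s_def by simp
    qed
    have wcK: "(\<Sum>a\<in>S. wc a * (g a + g (- a))) \<le> K0"
    proof -
      have "(\<Sum>a\<in>S. wc a * (g a + g (- a))) \<le> (\<Sum>a\<in>S. w a * (g a + g (- a)))"
        using gnn wnn by (intro sum_mono mult_right_mono) (auto simp: wc_def add_nonneg_nonneg)
      also have "\<dots> = K0" unfolding K0_def
        by (rule sum.mono_neutral_right[OF fS]) (auto simp: S_def A_def)
      finally show ?thesis .
    qed
    show "FW_set g w' \<subseteq> cball 0 (K0 / (\<delta> * m))"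
    proof
    fix x assume xF: "x \<in> FW_set g w'"
    then have "fw_objective g w' x \<le> fw_objective g w' 0" unfolding FW_set_def by auto
    then have le: "(\<Sum>a\<in>S. w' a * g (x - a)) \<le> (\<Sum>a\<in>S. w' a * g (0 - a))"
      using fw_superset[OF fS supp, of g x] fw_superset[OF fS supp, of g 0] by simp
    have termb: "w' a * g (x - a) - w' a * g (0 - a) \<ge>
        wc a * g x - wc a * (g a + g (- a)) - \<sigma> * (v a * g x)" for a
    proof -
      have wc0: "wc a \<ge> 0" unfolding wc_def using wnn by simp
      have "g x \<le> g (x - a) + g a" using sub[of "x - a" a] by simp
      then have 1: "wc a * (g x - g a - g (- a)) \<le> wc a * (g (x - a) - g (- a))"
        using wc0 by (intro mult_left_mono) auto
      have "g (- a) \<le> g (x - a) + g (- x)" using sub[of "x - a" "- x"] by simp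
      moreover have "g (- x) \<le> \<sigma> * g x" using skew[of "- x"] by simp
      ultimately have "- (\<sigma> * g x) \<le> g (x - a) - g (- a)" by linarith
      then have 2: "v a * (- (\<sigma> * g x)) \<le> v a * (g (x - a) - g (- a))"
        using vnn by (intro mult_left_mono) auto
      show ?thesis using 1 2 unfolding w'2 by (simp add: algebra_simps)
    qed
    have "(\<Sum>a\<in>S. wc a * g x - wc a * (g a + g (- a)) - \<sigma> * (v a * g x))
        \<le> (\<Sum>a\<in>S. w' a * g (x - a) - w' a * g (0 - a))"
      by (rule sum_mono) (use termb in auto)
    also have "\<dots> \<le> 0" using le by (simp add: sum_subtractf)
    finally have "(\<Sum>a\<in>S. wc a * g x) - (\<Sum>a\<in>S. wc a * (g a + g (- a))) - \<sigma> * ((\<Sum>a\<in>S. v a) * g x) \<le> 0"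
      by (simp add: sum_subtractf sum_distrib_left sum_distrib_right)
    then have "(1 - s) * g x - K0 - \<sigma> * (s * g x) \<le> 0"
      using wcS vS wcK by (simp add: sum_distrib_right[symmetric])
    then have A1: "(1 - s * (1 + \<sigma>)) * g x \<le> K0" by (simp add: algebra_simps)
    have "s \<le> \<tau>" using sC s_def by simp
    then have "s * (1 + \<sigma>) \<le> \<tau> * (1 + \<sigma>)" using s0 by (intro mult_right_mono) auto
    then have "\<delta> \<le> 1 - s * (1 + \<sigma>)" unfolding \<delta>_def by simp
    then have "\<delta> * g x \<le> K0" using A1 gnn[of x] mult_right_mono by (meson order_trans)
    moreover have "\<delta> * (m * norm x) \<le> \<delta> * g x" using GP_basic(3)[OF gp, of x] d by simp
    ultimately have "(\<delta> * m) * norm x \<le> K0" by (simp add: mult.assoc)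
    then show "x \<in> cball 0 (K0 / (\<delta> * m))" using d m by (simp add: divide_simps mult.commute)
  qed
  qed
qed




lemma not_robust_above:
  assumes gp: "GP g m M" and t1: "\<tau> < 1" and tg: "\<tau> * (1 + skewness g) > 1"
  shows "\<not> robust g \<tau>"
proof
  assume rob: "robust g \<tau>"
  define \<sigma> where "\<sigma> = skewness g"
  have s0: "\<sigma> \<ge> 0" unfolding \<sigma>_def using GP_skew(3)[OF gp] .
  have tp: "\<tau> > 0"
  proof (rule ccontr)
    assume "\<not> \<tau> > 0"
    then have "\<tau> * (1 + \<sigma>) \<le> 0" using s0 by (intro mult_nonpos_nonneg) auto
    then show False using tg \<sigma>_def by simp
  qed
  have "1 / \<tau> - 1 < \<sigma>" using tg tp unfolding \<sigma>_def by (simp add: field_simps)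
  then obtain u where u: "u \<in> UNIV - {0::'a}" "1 / \<tau> - 1 < g u / g (- u)"
  proof -
    obtain b :: 'a where "b \<in> Basis" using nonempty_Basis by blast
    then have "b \<in> UNIV - {0}" by auto
    then have ne: "UNIV - {0::'a} \<noteq> {}" by blast
    show ?thesis using less_cSUP_iff[OF ne GP_skew(1)[OF gp]] \<open>1 / \<tau> - 1 < \<sigma>\<close> that
      unfolding \<sigma>_def skewness_def by blast
  qed
  have u0: "u \<noteq> 0" using u by simp
  have gpu: "g (- u) > 0" "g u > 0" using GP_basic(6)[OF gp] u0 by auto
  have "(1 - \<tau>) * g (- u) < \<tau> * g u"
  proof -
    have "(1 / \<tau> - 1) * g (- u) < g u" using u(2) gpu by (simp add: divide_simps)
    then have "\<tau> * ((1 / \<tau> - 1) * g (- u)) < \<tau> * g u" using tp by simp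
    moreover have "\<tau> * ((1 / \<tau> - 1) * g (- u)) = (1 - \<tau>) * g (- u)" using tp by (simp add: field_simps)
    ultimately show ?thesis by simp
  qed
  define D where "D = \<tau> * g u - (1 - \<tau>) * g (- u)"
  have D: "D > 0" using \<open>(1 - \<tau>) * g (- u) < \<tau> * g u\<close> D_def by simp
  define w where "w a = (if a = 0 then 1 - \<tau> else if a = u then \<tau> else 0)" for a
  have suppw: "{a. w a \<noteq> 0} = {0, u}" using tp t1 u0 unfolding w_def by auto
  have sw: "sample w" unfolding sample_def fin_weights_def suppw
    using tp t1 u0 by (auto simp: w_def)
  obtain K where K: "bounded K" "\<And>w'. corruption \<tau> w w' \<Longrightarrow> FW_set g w' \<subseteq> K"
    using rob sw unfolding robust_def by blast
  obtain R where R: "R > 0" "\<forall>x\<in>K. norm x \<le> R" using K(1) bounded_pos by blast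
  have M: "M > 0" using gp unfolding GP_def by auto
  define t where "t = (\<tau> * M * R + 1) / D + 1"
  have t0: "t > 0" unfolding t_def using D M R tp by (simp add: add_pos_pos)
  have tD: "t * D > \<tau> * M * R"
  proof -
    have "t * D = (\<tau> * M * R + 1) + D" unfolding t_def using D by (simp add: field_simps)
    then show ?thesis using D by simp
  qed
  define T where "T = - (t *\<^sub>R u)"
  have T0: "T \<noteq> 0" unfolding T_def using t0 u0 by simp
  have Tu: "T \<noteq> u"
  proof
    assume "T = u"
    then have "- (t *\<^sub>R u) = u" unfolding T_def .
    then have "(t + 1) *\<^sub>R u = 0" by (metis add.commute add.right_inverse scaleR_add_left scaleR_one)
    then show False using t0 u0 by simp
  qed
  define v where "v a = (if a = T then \<tau> else 0)" for a
  define w' where "w' = (\<lambda>a. (if a \<in> {u} then 0 else w a) + v a)"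
  have suppv: "{a. v a \<noteq> 0} = {T}" using tp unfolding v_def by auto
  have cor: "corruption \<tau> w w'"
    unfolding corruption_def
    apply (rule exI[of _ "{u}"], rule exI[of _ v])
    using suppw suppv tp u0 by (auto simp: w'_def fin_weights_def v_def w_def)
  have w'0: "w' 0 = 1 - \<tau>" using u0 T0 unfolding w'_def w_def v_def by auto
  have w'T: "w' T = \<tau>" using Tu T0 unfolding w'_def w_def v_def by auto
  have w'o: "w' a = 0" if "a \<noteq> 0" "a \<noteq> T" for a using that unfolding w'_def w_def v_def by auto
  have suppw': "{a. w' a \<noteq> 0} = {0, T}" using w'0 w'T w'o tp t1 by auto
  have F: "fw_objective g w' x = (1 - \<tau>) * g x + \<tau> * g (x - T)" for x
    unfolding fw_objective_def suppw' using T0 w'0 w'T by simp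
  have "fin_weights w'" unfolding fin_weights_def suppw' using w'0 w'T w'o tp t1
    by (metis finite.emptyI finite_insert less_imp_le diff_ge_0_iff_ge order_refl)
  moreover have "sum w' {a. w' a \<noteq> 0} > 0" unfolding suppw' using T0 w'0 w'T tp by simp
  ultimately obtain x where x: "x \<in> FW_set g w'" using FW_nonempty[OF gp] by blast
  then have xK: "norm x \<le> R" using K(2)[OF cor] R by blast
  have "fw_objective g w' x \<le> fw_objective g w' T" using x unfolding FW_set_def by blast
  then have le: "(1 - \<tau>) * g x + \<tau> * g (x - T) \<le> (1 - \<tau>) * g T" using F GP_basic(2)[OF gp] by simp
  have gT: "g T = t * g (- u)" unfolding T_def using GP_basic(7)[OF gp t0, of "- u"] by simp
  have gtu: "g (t *\<^sub>R u) = t * g u" using GP_basic(7)[OF gp t0] .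
  have "g (t *\<^sub>R u) \<le> g (x - T) + g (- x)"
    using GP_basic(5)[OF gp, of "x - T" "- x"] unfolding T_def by simp
  moreover have "g (- x) \<le> M * R"
    using GP_basic(4)[OF gp, of "- x"] xK M by (smt (verit) mult_left_mono norm_minus_cancel)
  ultimately have "t * g u - M * R \<le> g (x - T)" using gtu by linarith
  then have "\<tau> * (t * g u - M * R) \<le> \<tau> * g (x - T)" using tp by simp
  moreover have "(1 - \<tau>) * g x \<ge> 0" using t1 GP_basic(1)[OF gp, of x] by simp
  ultimately have "\<tau> * (t * g u - M * R) \<le> (1 - \<tau>) * (t * g (- u))" using le unfolding gT by linarith
  then have "t * D \<le> \<tau> * M * R" unfolding D_def by (simp add: algebra_simps)
  then show False using tD by simp
qed

theorem mainTheorem6: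
  fixes g :: "'a::euclidean_space \<Rightarrow> real"
  assumes "is_gauge g"
  shows "breakdown_point g = 1 / (1 + skewness g)"
proof -
  obtain m M where gp: "GP g m M" using gauge_props[OF assms] unfolding GP_def by blast
  define \<sigma> where "\<sigma> = skewness g"
  have s0: "\<sigma> \<ge> 0" unfolding \<sigma>_def using GP_skew(3)[OF gp] .
  define b where "b = 1 / (1 + \<sigma>)"
  have b0: "b > 0" "b \<le> 1" unfolding b_def using s0 by (auto simp: divide_simps)
  define S where "S = {\<tau>. 0 \<le> \<tau> \<and> \<tau> < 1 \<and> robust g \<tau>}"
  have inS: "\<tau> \<in> S" if "0 \<le> \<tau>" "\<tau> < b" for \<tau>
  proof -
    have "\<tau> * (1 + \<sigma>) < b * (1 + \<sigma>)" using that s0 by (intro mult_strict_right_mono) auto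
    also have "b * (1 + \<sigma>) = 1" unfolding b_def using s0 by simp
    finally show ?thesis unfolding S_def using robust_below[OF gp] that b0 \<sigma>_def by auto
  qed
  have upS: "\<tau> \<le> b" if "\<tau> \<in> S" for \<tau>
  proof (rule ccontr)
    assume "\<not> \<tau> \<le> b"
    then have "b * (1 + \<sigma>) < \<tau> * (1 + \<sigma>)" using s0 by (intro mult_strict_right_mono) auto
    moreover have "b * (1 + \<sigma>) = 1" unfolding b_def using s0 by simp
    ultimately show False using not_robust_above[OF gp] that unfolding S_def \<sigma>_def by auto
  qed
  have "Sup S = b"
  proof (rule cSup_eq_non_empty)
    show "S \<noteq> {}" using inS[of 0] b0 by auto
    show "\<And>x. x \<in> S \<Longrightarrow> x \<le> b" using upS .
    fix y assume ub: "\<And>x. x \<in> S \<Longrightarrow> x \<le> y"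
    show "b \<le> y"
    proof (rule ccontr)
      assume "\<not> b \<le> y"
      define z where "z = max 0 ((y + b) / 2)"
      have "z \<in> S" using inS[of z] \<open>\<not> b \<le> y\<close> b0 unfolding z_def by auto
      then have "z \<le> y" using ub by blast
      moreover have "y < z"
      proof -
        have "y < (y + b) / 2" using \<open>\<not> b \<le> y\<close> by simp
        then show ?thesis unfolding z_def by (meson max.cobounded2 order_less_le_trans)
      qed
      ultimately show False by simp
    qed
  qed
  then show ?thesis unfolding breakdown_point_def S_def b_def \<sigma>_def .
qed


end
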